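(* Suppose that for all positive integers $s,t,k$ with $st \le k^2$ one has $R(s,t) \le R(k,k)$. Then \[ \limsup_{k\to\infty} \frac{\log(R(k,k))}{k} = \limsup_{t\to\infty} \max_{1 \le s \le t} \frac{\log(R(s,t))}{\sqrt{st}}. \]
   Context: All logarithms are in base 2. For positive integers $s,t$, the Ramsey number $R(s,t)$ is the minimum $n$ such that every red/blue edge-coloring of the complete graph $K_n$ contains a red clique on $s$ vertices or a blue clique on $t$ vertices. *)

theory Defs
  imports "HOL-Analysis.Analysis"
begin

text \<open>A red/blue edge-colouring of K_n on vertex set {..<n} is a map
  c :: nat set => bool on 2-element subsets (True = red, False = blue).\<close>

definition has_mono_clique :: "nat \<Rightarrow> (nat set \<Rightarrow> bool) \<Rightarrow> bool \<Rightarrow> nat \<Rightarrow> bool" where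
  "has_mono_clique n c col m \<longleftrightarrow>
     (\<exists>S. S \<subseteq> {..<n} \<and> card S = m \<and>
          (\<forall>x\<in>S. \<forall>y\<in>S. x \<noteq> y \<longrightarrow> c {x, y} = col))"

definition ramsey_prop :: "nat \<Rightarrow> nat \<Rightarrow> nat \<Rightarrow> bool" where
  "ramsey_prop s t n \<longleftrightarrow>
     (\<forall>c :: nat set \<Rightarrow> bool. has_mono_clique n c True s \<or> has_mono_clique n c False t)"

definition ramsey :: "nat \<Rightarrow> nat \<Rightarrow> nat" where
  "ramsey s t = (LEAST n. ramsey_prop s t n)"

end

theory Submission
  imports Defs
begin

lemma log_nat_nonneg: "0 \<le> log 2 (real (n::nat))"
  by (cases "n = 0") (auto simp: log_def)

lemma log_nat_mono: assumes mn: "(m::nat) \<le> n" shows "log 2 (real m) \<le> log 2 (real n)"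
  proof (cases "m = 0")
  case True then show ?thesis using log_nat_nonneg[of n] by (simp add: log_def)
next
  case False then show ?thesis using mn by (subst log_le_cancel_iff) auto
qed

lemma ceil_facts:
  fixes s t :: nat
  assumes "0 < s" "0 < t"
  defines "k \<equiv> nat \<lceil>sqrt (real s * real t)\<rceil>"
  shows "0 < k" "s * t \<le> k ^ 2" "real k < sqrt (real s * real t) + 1"
proof -
  have pos: "0 < sqrt (real s * real t)" using assms by simp
  have kr: "real k = real_of_int \<lceil>sqrt (real s * real t)\<rceil>" unfolding k_def
    using pos by simp
  have ge: "sqrt (real s * real t) \<le> real k" using kr by linarith
  show "0 < k" using ge pos by linarith
  show "real k < sqrt (real s * real t) + 1" using kr by linarith
  have "real s * real t = (sqrt (real s * real t))^2" by simp
  also have "\<dots> \<le> (real k)^2" using ge pos by (intro power_mono) auto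
  finally have "real (s*t) \<le> real (k^2)" by simp
  then show "s * t \<le> k ^ 2" by linarith
qed

theorem fact2p3:
  assumes "\<forall>s t k :: nat. 0 < s \<longrightarrow> 0 < t \<longrightarrow> 0 < k \<longrightarrow> s * t \<le> k ^ 2
             \<longrightarrow> ramsey s t \<le> ramsey k k"
  shows "limsup (\<lambda>k::nat. ereal (log 2 (real (ramsey k k)) / real k)) =
         limsup (\<lambda>t::nat. ereal (Max ((\<lambda>s. log 2 (real (ramsey s t)) / sqrt (real s * real t)) ` {1..t})))"
proof -
  define a where "a = (\<lambda>k::nat. log 2 (real (ramsey k k)) / real k)"
  define b where "b = (\<lambda>t::nat. Max ((\<lambda>s. log 2 (real (ramsey s t)) / sqrt (real s * real t)) ` {1..t}))"
  have anonneg: "0 \<le> a k" for k unfolding a_def using log_nat_nonneg by simp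
  have ab: "a t \<le> b t" if "1 \<le> t" for t
  proof -
    have "a t = log 2 (real (ramsey t t)) / sqrt (real t * real t)"
      unfolding a_def by simp
    also have "\<dots> \<le> b t" unfolding b_def
    proof (rule Max_ge)
      show "log 2 (real (ramsey t t)) / sqrt (real t * real t)
        \<in> (\<lambda>s. log 2 (real (ramsey s t)) / sqrt (real s * real t)) ` {1..t}"
        using that by (intro imageI) auto
    qed auto
    finally show ?thesis .
  qed
  have le1: "limsup (\<lambda>k. ereal (a k)) \<le> limsup (\<lambda>t. ereal (b t))"
    by (rule Limsup_mono) (use ab in \<open>auto simp: eventually_sequentially\<close>)
  have le2: "limsup (\<lambda>t. ereal (b t)) \<le> limsup (\<lambda>k. ereal (a k))"
  proof (rule ccontr)
    assume "\<not> ?thesis"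
    then have "limsup (\<lambda>k. ereal (a k)) < limsup (\<lambda>t. ereal (b t))" by simp
    then obtain y where y1: "limsup (\<lambda>k. ereal (a k)) < ereal y"
      and y2: "ereal y < limsup (\<lambda>t. ereal (b t))"
      using ereal_dense2 by blast
    have "eventually (\<lambda>k. ereal (a k) < ereal y) sequentially"
      by (rule Limsup_lessD) (rule y1)
    then obtain K0 where K0: "\<And>k. k \<ge> K0 \<Longrightarrow> a k < y"
      by (auto simp: eventually_sequentially)
    have y0: "0 \<le> y" using K0[of K0] anonneg[of K0] by simp
    define Mb where "Mb = (\<Sum>k<K0. log 2 (real (ramsey k k)))"
    have Mb: "log 2 (real (ramsey k k)) \<le> Mb" if "k < K0" for k
      unfolding Mb_def
      by (rule member_le_sum) (use that log_nat_nonneg in auto)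
    have Mb0: "0 \<le> Mb" unfolding Mb_def by (rule sum_nonneg) (use log_nat_nonneg in auto)
    define g where "g = (\<lambda>t::nat. y + (y + Mb) / sqrt (real t))"
    have bg: "b t \<le> g t" if t1: "1 \<le> t" for t
      unfolding b_def
    proof (subst Max_le_iff, simp, use t1 in simp, safe)
      fix s assume s: "s \<in> {1..t}"
      then have s0: "0 < s" and st: "s \<le> t" by auto
      have t0: "0 < t" using t1 by simp
      define k where "k = nat \<lceil>sqrt (real s * real t)\<rceil>"
      note cf = ceil_facts[OF s0 t0, folded k_def]
      have R: "log 2 (real (ramsey s t)) \<le> log 2 (real (ramsey k k))"
        using assms cf s0 t0 by (intro log_nat_mono) auto
      have sq: "sqrt (real t) \<le> sqrt (real s * real t)"
        proof -
          have "real t * 1 \<le> real t * real s" using s0 by (intro mult_left_mono) auto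
          then show ?thesis by (simp add: mult.commute)
        qed
      have sqt: "0 < sqrt (real t)" using t0 by simp
      have G1: "y \<le> g t" "Mb / sqrt (real t) \<le> g t" "y / sqrt (real t) + y \<le> g t"
        unfolding g_def using y0 Mb0 sqt by (auto simp: add_divide_distrib)
      show "log 2 (real (ramsey s t)) / sqrt (real s * real t) \<le> g t"
      proof (cases "k \<ge> K0")
        case True
        have "log 2 (real (ramsey k k)) = a k * real k"
          unfolding a_def using cf by simp
        also have "\<dots> \<le> y * real k" using K0[OF True] by (intro mult_right_mono) auto
        also have "\<dots> \<le> y * (sqrt (real s * real t) + 1)"
          using cf y0 by (intro mult_left_mono) auto
        finally have "log 2 (real (ramsey s t)) \<le> y * (sqrt (real s * real t) + 1)"
          using R by linarith
        then have "log 2 (real (ramsey s t)) / sqrt (real s * real t)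
             \<le> y * (sqrt (real s * real t) + 1) / sqrt (real s * real t)"
          using sqt sq by (intro divide_right_mono) auto
        also have "\<dots> = y + y / sqrt (real s * real t)"
          using sqt sq by (simp add: field_simps)
        also have "\<dots> \<le> y + y / sqrt (real t)"
          using sqt sq y0 by (intro add_left_mono divide_left_mono) auto
        finally show ?thesis using G1 by linarith
      next
        case False
        then have "log 2 (real (ramsey s t)) \<le> Mb" using R Mb[of k] by simp
        then have "log 2 (real (ramsey s t)) / sqrt (real s * real t) \<le> Mb / sqrt (real s * real t)"
          using sqt sq by (intro divide_right_mono) auto
        also have "\<dots> \<le> Mb / sqrt (real t)"
          using sqt sq Mb0 by (intro divide_left_mono) auto
        finally show ?thesis using G1 by linarith
      qed
    qed
    have "limsup (\<lambda>t. ereal (b t)) \<le> limsup (\<lambda>t. ereal (g t))"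
      by (rule Limsup_mono) (use bg in \<open>auto simp: eventually_sequentially\<close>)
    also have "limsup (\<lambda>t. ereal (g t)) = ereal y"
    proof (rule lim_imp_Limsup)
      show "\<not> trivial_limit (sequentially :: nat filter)" by simp
      have "filterlim (\<lambda>t::nat. sqrt (real t)) at_top sequentially"
        by (rule filterlim_compose[OF sqrt_at_top filterlim_real_sequentially])
      then have "((\<lambda>t::nat. (y + Mb) / sqrt (real t)) \<longlongrightarrow> 0) sequentially"
        by (intro tendsto_divide_0[OF tendsto_const] filterlim_at_top_imp_at_infinity)
      then have "(g \<longlongrightarrow> y + 0) sequentially"
        unfolding g_def by (intro tendsto_add tendsto_const)
      then show "((\<lambda>t. ereal (g t)) \<longlongrightarrow> ereal y) sequentially" by simp
    qed
    finally show False using y2 by simp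
  qed
  show ?thesis using le1 le2 unfolding a_def b_def by simp
qed

end
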